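(* Let $q$ be a prime power, $l\ge1$, $t=q^l$, $G_1(x)=x^{t-1}+1$, $G_2(x)=x^t+x$, and $L_1^*=\{\alpha\in GF(t^2):\ \alpha\neq0,\ G_1(\alpha)\ne0\}$. Then the $q$-ary Goppa codes $\Gamma_2^{(q-1)}=\Gamma(L_1^*,G_2^{q-1})$ and $\Gamma_1^{*(q-1)}=\Gamma(L_1^*,G_1^{q-1})$ have equal parity-check matrices, i.e., they coincide as codes.
   Context: For a set $L=\{\alpha_1,\dots,\alpha_n\}$ of distinct elements of $GF(t^2)$ and $P\in GF(t^2)[x]$ with $P(\alpha_k)\neq0$ for all $k$, the $q$-ary Goppa code is $\Gamma(L,P)=\{c\in GF(q)^n:\ \sum_k c_k\alpha_k^s/P(\alpha_k)=0 \text{ for } s=0,\dots,\deg P-1\}$. *)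

theory Defs
  imports "HOL-Computational_Algebra.Polynomial"
begin

text \<open>The ambient field GF(t^2) is a finite field type 'a.  A codeword with coordinates indexed by
  the locator set L is a function c :: 'a \<Rightarrow> 'a, with c \<alpha> \<in> GF(q) for \<alpha> \<in> L
  and c \<alpha> = 0 for \<alpha> \<notin> L (extensional representation).\<close>

definition subfield_GF :: "nat \<Rightarrow> 'a::field set" where
  "subfield_GF q = {x. x ^ q = x}"

definition goppa_code :: "nat \<Rightarrow> 'a::field set \<Rightarrow> 'a poly \<Rightarrow> ('a \<Rightarrow> 'a) set" where
  "goppa_code q L P =
     {c. (\<forall>\<alpha>. \<alpha> \<notin> L \<longrightarrow> c \<alpha> = 0) \<and> (\<forall>\<alpha>\<in>L. c \<alpha> \<in> subfield_GF q) \<and>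
         (\<forall>s < degree P. (\<Sum>\<alpha>\<in>L. c \<alpha> * \<alpha> ^ s / poly P \<alpha>) = 0)}"

end

theory Submission
  imports Defs "HOL-Computational_Algebra.Primes"
begin

lemma ff_pow_card:
  fixes x :: "'a :: {finite, field}"
  shows "x ^ card (UNIV :: 'a set) = x"
proof (cases "x = 0")
  case False
  have "x * (\<Prod>y\<in>UNIV-{0}. x * y) = x * x ^ (card (UNIV :: 'a set) - 1) * \<Prod>(UNIV-{0})"
    by (simp add: prod.distrib mult_ac)
  also have "x * x ^ (card (UNIV :: 'a set) - 1) = x ^ Suc (card (UNIV :: 'a set) - 1)"
    by (subst power_Suc) auto
  also have "Suc (card (UNIV :: 'a set) - 1) = card (UNIV :: 'a set)"
    using finite_UNIV_card_ge_0[where ?'a = 'a] by simp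
  also have "(\<Prod>y\<in>UNIV-{0}. x * y) = (\<Prod>y\<in>UNIV-{0}. y)"
    by (rule prod.reindex_bij_witness[of _ "\<lambda>y. y / x" "\<lambda>y. x * y"]) (use False in auto)
  finally show ?thesis
    by simp
qed (use finite_UNIV_card_ge_0[where ?'a = 'a] in auto)

lemma ff_char:
  assumes "prime p" and "card (UNIV :: 'a :: {finite, field} set) = p ^ k"
  shows "CHAR('a) = p"
proof -
  have "CHAR('a) > 0" by (rule finite_imp_CHAR_pos) simp
  hence pc: "prime CHAR('a)" by (rule prime_CHAR_semidom)
  have "(\<Sum>y\<in>UNIV. 1 + y) = (\<Sum>y\<in>(UNIV::'a set). y)"
    by (rule sum.reindex_bij_witness[of _ "\<lambda>y. y - 1" "\<lambda>y. 1 + y"]) auto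
  hence "of_nat (card (UNIV::'a set)) = (0::'a)" by (simp add: sum.distrib)
  hence "CHAR('a) dvd card (UNIV::'a set)" using of_nat_eq_0_iff_char_dvd by blast
  hence "CHAR('a) dvd p ^ k" using assms(2) by simp
  hence "CHAR('a) dvd p" using pc prime_dvd_power by blast
  thus ?thesis using pc assms(1) primes_dvd_imp_eq by blast
qed

lemma key:
  fixes c :: "'a::{finite,field} \<Rightarrow> 'a" and L :: "'a set"
  assumes pr: "prime CHAR('a)" and qd: "q = CHAR('a) ^ m" and td: "t = CHAR('a) ^ (m*l)"
    and q2: "q \<ge> 2" and l1: "l \<ge> 1" and tq: "t = q^l"
    and pw: "\<And>x::'a. x \<noteq> 0 \<Longrightarrow> x ^ (t*t) = x"
    and L: "L = {a. a \<noteq> 0 \<and> a^(t-1) + 1 \<noteq> 0}"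
    and cq: "\<forall>a\<in>L. c a ^ q = c a"
    and hyp: "\<forall>e. q-1 \<le> e \<and> e < t*(q-1) \<longrightarrow> (\<Sum>a\<in>L. c a * a^e / (a^t+a)^(q-1)) = 0"
  shows "\<forall>e < t*(q-1). (\<Sum>a\<in>L. c a * a^e / (a^t+a)^(q-1)) = 0"
proof -
  define A where "A e = (\<Sum>a\<in>L. c a * a^e / (a^t+a)^(q-1))" for e
  define \<tau> where "\<tau> a = a^t + a" for a :: 'a
  have t1: "t \<ge> 1" using tq q2 by simp
  have tqge: "t \<ge> q" using power_increasing[of 1 l q] l1 q2 tq by simp
  have cpow: "c a ^ (q^n) = c a" if "a \<in> L" for a n
  proof (induction n)
    case (Suc n)
    have "c a ^ (q ^ Suc n) = (c a ^ (q^n)) ^ q" by (simp only: power_Suc2 power_mult)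
    thus ?case using Suc cq that by simp
  qed simp
  have ct: "c a ^ t = c a" if "a \<in> L" for a using cpow[OF that, of l] tq by simp
  have fr_t: "(x + y) ^ t = x ^ t + y ^ t" for x y :: 'a
    by (rule freshmans_dream'[OF pr td])
  have frs_t: "sum f B ^ t = (\<Sum>i\<in>B. f i ^ t)" for f :: "'b \<Rightarrow> 'a" and B
    by (rule freshmans_dream_sum'[OF pr td])
  have frs_q: "sum f B ^ q = (\<Sum>i\<in>B. f i ^ q)" for f :: "'b \<Rightarrow> 'a" and B
    by (rule freshmans_dream_sum'[OF pr qd])
  have tau_fac: "\<tau> a = a * (a^(t-1) + 1)" for a
  proof -
    have "a * a^(t-1) = a^t" using t1 by (metis power_Suc Suc_diff_1 less_le_trans zero_less_one)
    thus ?thesis unfolding \<tau>_def by (simp add: distrib_left)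
  qed
  have tau_nz: "\<tau> a \<noteq> 0" if "a \<in> L" for a using that L tau_fac by auto
  have tau_t: "\<tau> a ^ t = \<tau> a" if "a \<in> L" for a
  proof -
    have "\<tau> a ^ t = (a^t)^t + a^t" unfolding \<tau>_def fr_t by simp
    also have "(a^t)^t = a" using pw[of a] that L by (simp add: power_mult[symmetric])
    finally show ?thesis unfolding \<tau>_def by simp
  qed
  have tau_t1: "\<tau> a ^ (t-1) = 1" if "a \<in> L" for a
  proof -
    have "\<tau> a * \<tau> a ^ (t-1) = \<tau> a * 1" using tau_t[OF that] t1
      by (metis mult.right_neutral power_Suc Suc_diff_1 less_le_trans zero_less_one)
    thus ?thesis using tau_nz[OF that] by simp
  qed
  have A_alt: "A e = (\<Sum>a\<in>L. c a * a^e / \<tau> a^(q-1))" for e unfolding A_def \<tau>_def ..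
  have A_frob: "A e ^ t = A (e*t)" for e
  proof -
    have "A e ^ t = (\<Sum>a\<in>L. (c a * a^e / \<tau> a^(q-1)) ^ t)" unfolding A_alt frs_t ..
    also have "\<dots> = (\<Sum>a\<in>L. c a * a^(e*t) / \<tau> a^(q-1))"
    proof (rule sum.cong)
      fix a assume a: "a \<in> L"
      have "(c a * a^e / \<tau> a^(q-1)) ^ t = c a ^ t * (a^e)^t / (\<tau> a ^ t)^(q-1)"
        by (simp add: power_divide power_mult_distrib power_mult[symmetric] mult.commute)
      thus "(c a * a^e / \<tau> a^(q-1)) ^ t = c a * a^(e*t) / \<tau> a^(q-1)"
        using ct[OF a] tau_t[OF a] by (simp add: power_mult)
    qed simp
    finally show ?thesis unfolding A_alt .
  qed
  have A_mod: "A (x + k*(t*t)) = A (x + k)" for x k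
    unfolding A_alt
  proof (rule sum.cong)
    fix a assume a: "a \<in> L"
    have "a ^ (x + k*(t*t)) = a^x * a^((t*t)*k)" by (simp add: power_add mult.commute)
    also have "\<dots> = a^x * (a^(t*t))^k" by (simp only: power_mult)
    also have "\<dots> = a^(x+k)" using pw[of a] a L by (simp add: power_add)
    finally show "c a * a ^ (x + k*(t*t)) / \<tau> a ^ (q-1) = c a * a ^ (x+k) / \<tau> a ^ (q-1)" by simp
  qed simp
  have hypA: "A e = 0" if "q-1 \<le> e" "e < t*(q-1)" for e using hyp that unfolding A_def by blast
  have e2range: "q-1 \<le> Q + t*k + (q-2-k) \<and> Q + t*k + (q-2-k) < t*(q-1)"
    if "k \<le> q-2" "Q \<ge> 1" "Q + q - 2 < t" for k Q
  proof -
    have "k \<le> t*k" using t1 by simp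
    moreover have "t*k \<le> t*(q-2)" using that(1) by simp
    moreover have "t + t*(q-2) = t*(q-1)"
    proof -
      have "q - 1 = Suc (q-2)" using q2 by simp
      thus ?thesis by simp
    qed
    ultimately show ?thesis using that q2 by linarith
  qed
  show ?thesis
  proof (intro allI impI)
    fix e assume e: "e < t*(q-1)"
    have "A e = 0"
    proof (cases "q - 1 \<le> e")
      case True thus ?thesis using hypA e by blast
    next
      case False
      show ?thesis
      proof (cases "e = 0")
        case False2: False
        have "t \<le> e*t" using False2 by simp
        hence "q - 1 \<le> e*t" using tqge by linarith
        moreover have "e*t < t*(q-1)" using \<open>\<not> q - 1 \<le> e\<close> t1 by (simp add: mult.commute)
        ultimately have "A (e*t) = 0" by (rule hypA)
        hence "A (e*t*t) = 0" using A_frob[of "e*t"] t1 by (simp add: power_0_left)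
        moreover have "e*t*t = 0 + e*(t*t)" by simp
        ultimately show ?thesis using A_mod[of 0 e] by simp
      next
        case True
        define Q where "Q = q^(l-1)"
        have qQ: "q*Q = t" unfolding Q_def tq using l1
          by (metis Suc_diff_1 less_le_trans power_Suc zero_less_one)
        have Q1: "Q \<ge> 1" unfolding Q_def using q2 by simp
        have "(q-1)*Q \<ge> q - 1" using Q1 by simp
        moreover have "t = Q + (q-1)*Q"
        proof -
          have qs: "q = Suc (q-1)" using q2 by simp
          show ?thesis using qQ by (subst (asm) qs) simp
        qed
        ultimately have Qt: "Q + q - 2 < t" using q2 by linarith
        have QC: "Q = CHAR('a) ^ (m*(l-1))" unfolding Q_def qd by (simp add: power_mult)
        have frQ: "(x + y) ^ Q = x ^ Q + y ^ Q" for x y :: 'a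
          by (rule freshmans_dream'[OF pr QC])
        define Y where "Y = (\<Sum>a\<in>L. c a * \<tau> a ^ (Q-1))"
        have "Y ^ q = (\<Sum>a\<in>L. (c a * \<tau> a ^ (Q-1)) ^ q)" unfolding Y_def frs_q ..
        also have "\<dots> = A 0" unfolding A_alt
        proof (rule sum.cong)
          fix a assume a: "a \<in> L"
          have ex: "(Q-1)*q = t - q" using qQ by (simp add: diff_mult_distrib mult.commute[of Q q])
          have "\<tau> a ^ (t-q) * \<tau> a ^ (q-1) = \<tau> a ^ (t-1)"
            using tqge q2 by (simp add: power_add[symmetric])
          hence "\<tau> a ^ (t-q) * \<tau> a ^ (q-1) = 1" using tau_t1[OF a] by simp
          hence inv: "\<tau> a ^ (t-q) = 1 / \<tau> a ^ (q-1)" using tau_nz[OF a]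
            by (simp add: field_simps)
          have "(c a * \<tau> a ^ (Q-1)) ^ q = c a ^ q * \<tau> a ^ ((Q-1)*q)"
            by (simp add: power_mult_distrib power_mult)
          also have "\<dots> = c a * \<tau> a ^ (t-q)" using cq a ex by simp
          finally show "(c a * \<tau> a ^ (Q-1)) ^ q = c a * a ^ 0 / \<tau> a ^ (q-1)" using inv by simp
        qed simp
        finally have YA: "Y ^ q = A 0" .
        define C where "C k = (of_nat ((q-2) choose k) :: 'a)" for k
        have "Y = (\<Sum>a\<in>L. \<Sum>k\<le>q-2. C k * (c a * a^(t*Q + t*k + (q-2-k)) / \<tau> a ^ (q-1)
                    + c a * a^(Q + t*k + (q-2-k)) / \<tau> a ^ (q-1)))"
          unfolding Y_def
        proof (rule sum.cong)
          fix a assume a: "a \<in> L"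
          have "Q + (q-2) = (Q-1) + (q-1)" using Q1 q2 by linarith
          hence "\<tau> a ^ (Q + (q-2)) = \<tau> a ^ (Q-1) * \<tau> a ^ (q-1)"
            by (simp only: power_add)
          hence e1: "\<tau> a ^ (Q-1) = \<tau> a ^ (Q + (q-2)) / \<tau> a ^ (q-1)" using tau_nz[OF a] by simp
          have "\<tau> a ^ (Q + (q-2)) = \<tau> a ^ Q * \<tau> a ^ (q-2)" by (simp add: power_add)
          also have "\<tau> a ^ Q = a^(t*Q) + a^Q" unfolding \<tau>_def frQ by (simp add: power_mult)
          also have "\<tau> a ^ (q-2) = (\<Sum>k\<le>q-2. C k * (a^t)^k * a^(q-2-k))"
            unfolding \<tau>_def C_def by (rule binomial_ring)
          also have "(a^(t*Q) + a^Q) * (\<Sum>k\<le>q-2. C k * (a^t)^k * a^(q-2-k))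
             = (\<Sum>k\<le>q-2. C k * (a^(t*Q + t*k + (q-2-k)) + a^(Q + t*k + (q-2-k))))"
            unfolding sum_distrib_left
            by (rule sum.cong) (simp_all add: power_add power_mult[symmetric] algebra_simps)
          finally have "\<tau> a ^ (Q + (q-2)) = (\<Sum>k\<le>q-2. C k * (a^(t*Q + t*k + (q-2-k)) + a^(Q + t*k + (q-2-k))))" .
          thus "c a * \<tau> a ^ (Q-1) = (\<Sum>k\<le>q-2. C k * (c a * a^(t*Q + t*k + (q-2-k)) / \<tau> a ^ (q-1)
                    + c a * a^(Q + t*k + (q-2-k)) / \<tau> a ^ (q-1)))"
            unfolding e1 by (simp add: sum_distrib_left sum_divide_distrib algebra_simps add_divide_distrib)
        qed simp
        also have "\<dots> = (\<Sum>k\<le>q-2. C k * (A (t*Q + t*k + (q-2-k)) + A (Q + t*k + (q-2-k))))"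
          unfolding A_alt by (subst sum.swap, rule sum.cong, simp, simp add: sum_distrib_left sum.distrib distrib_left)
        also have "\<dots> = 0"
        proof (rule sum.neutral, rule ballI)
          fix k assume k: "k \<in> {..q-2}"
          have z2: "A (Q + t*k + (q-2-k)) = 0" using e2range[OF _ Q1 Qt] k hypA by auto
          have kk: "q-2-k \<le> q-2" by simp
          have "A (Q + t*(q-2-k) + (q-2-(q-2-k))) = 0"
            using e2range[OF kk Q1 Qt] hypA by auto
          moreover have "q-2-(q-2-k) = k" using k by simp
          ultimately have "A (Q + t*(q-2-k) + k) = 0" by simp
          hence "A ((Q + t*(q-2-k) + k) * t) = 0" using A_frob[of "Q + t*(q-2-k) + k"] t1 by (simp add: power_0_left)
          moreover have "(Q + t*(q-2-k) + k) * t = (t*Q + t*k) + (q-2-k)*(t*t)"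
            by (simp add: algebra_simps)
          ultimately have "A ((t*Q + t*k) + (q-2-k)) = 0" using A_mod by simp
          thus "C k * (A (t*Q + t*k + (q-2-k)) + A (Q + t*k + (q-2-k))) = 0" using z2 by simp
        qed
        finally have "Y = 0" .
        thus ?thesis using YA True q2 by (simp add: power_0_left)
      qed
    qed
    thus "(\<Sum>a\<in>L. c a * a^e / (a^t+a)^(q-1)) = 0" unfolding A_def .
  qed
qed


lemma code_eq_aux:
  fixes c :: "'a::field \<Rightarrow> 'a" and L :: "'a set"
  assumes "\<forall>a\<in>L. a \<noteq> 0" and "t \<ge> 1"
  shows "(\<Sum>a\<in>L. c a * a^s / (a^(t-1)+1)^(q-1)) = (\<Sum>a\<in>L. c a * a^(s+(q-1)) / (a^t+a)^(q-1))"
proof (rule sum.cong)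
  fix a assume a: "a \<in> L"
  have "a^t + a = a * (a^(t-1)+1)"
  proof (cases t)
    case 0 thus ?thesis using assms(2) by simp
  next
    case (Suc n) thus ?thesis by (simp add: distrib_left)
  qed
  hence "(a^t+a)^(q-1) = a^(q-1) * (a^(t-1)+1)^(q-1)" by (simp add: power_mult_distrib)
  thus "c a * a^s / (a^(t-1)+1)^(q-1) = c a * a^(s+(q-1)) / (a^t+a)^(q-1)"
    using assms a by (simp add: power_add)
qed simp

theorem lemma5:
  fixes q l t p m :: nat
    and L1 :: "'a::{finite, field} set"
    and G1 G2 :: "'a poly"
  assumes "prime p" and "m \<ge> 1" and "q = p ^ m"
    and "l \<ge> 1" and "t = q ^ l"
    and "card (UNIV :: 'a set) = t ^ 2"
    and "G1 = monom 1 (t - 1) + 1"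
    and "G2 = monom 1 t + monom 1 1"
    and "L1 = {\<alpha>. \<alpha> \<noteq> 0 \<and> poly G1 \<alpha> \<noteq> 0}"
  shows "goppa_code q L1 (G2 ^ (q - 1)) = goppa_code q L1 (G1 ^ (q - 1))"
proof -
  have p2: "p \<ge> 2" using assms(1) prime_ge_2_nat by blast
  have q2: "q \<ge> 2" using assms(2,3) p2
    by (metis One_nat_def le_trans power_increasing power_one_right zero_less_Suc le_SucE less_imp_le_nat one_le_numeral order.refl)
  have tq: "t \<ge> q" using power_increasing[of 1 l q] assms(4,5) q2 by simp
  have td: "t = p ^ (m*l)" using assms(3,5) by (simp add: power_mult)
  have card: "card (UNIV :: 'a set) = p ^ (m*l*2)" using assms(6) td by (simp add: power_mult)
  have ch: "CHAR('a) = p" by (rule ff_char[OF assms(1) card])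
  have pr: "prime CHAR('a)" using ch assms(1) by simp
  have pw: "x ^ (t*t) = x" for x :: 'a using ff_pow_card[of x] assms(6) by (simp add: power2_eq_square)
  have pG1: "poly G1 a = a^(t-1) + 1" for a by (simp add: assms(7) poly_monom)
  have pG2: "poly G2 a = a^t + a" for a by (simp add: assms(8) poly_monom)
  have L: "L1 = {a. a \<noteq> 0 \<and> a^(t-1) + 1 \<noteq> 0}" using assms(9) pG1 by simp
  have dG2: "degree G2 = t"
  proof -
    have "degree (monom (1::'a) 1) < degree (monom (1::'a) t)" using tq q2 by (simp add: degree_monom_eq)
    thus ?thesis unfolding assms(8) by (simp add: degree_add_eq_left degree_monom_eq)
  qed
  have dG1: "degree G1 = t - 1"
  proof -
    have "degree (1::'a poly) < degree (monom (1::'a) (t-1))" using tq q2 by (simp add: degree_monom_eq)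
    thus ?thesis unfolding assms(7) by (simp add: degree_add_eq_left degree_monom_eq)
  qed
  have "G2 \<noteq> 0" using dG2 tq q2 by auto
  hence d2: "degree (G2 ^ (q-1)) = t*(q-1)" using dG2 by (simp add: degree_power_eq)
  have "G1 \<noteq> 0" using dG1 tq q2 by auto
  hence d1: "degree (G1 ^ (q-1)) = (t-1)*(q-1)" using dG1 by (simp add: degree_power_eq)
  have t1: "t \<ge> 1" using tq q2 by simp
  have nz: "\<forall>a\<in>L1. a \<noteq> 0" using L by auto
  have eqv: "(\<forall>s < t*(q-1). (\<Sum>a\<in>L1. c a * a^s / (a^t+a)^(q-1)) = 0) \<longleftrightarrow>
             (\<forall>s < (t-1)*(q-1). (\<Sum>a\<in>L1. c a * a^s / (a^(t-1)+1)^(q-1)) = 0)"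
    if cq: "\<forall>a\<in>L1. c a ^ q = c a" for c :: "'a \<Rightarrow> 'a"
  proof
    assume H: "\<forall>s < t*(q-1). (\<Sum>a\<in>L1. c a * a^s / (a^t+a)^(q-1)) = 0"
    show "\<forall>s < (t-1)*(q-1). (\<Sum>a\<in>L1. c a * a^s / (a^(t-1)+1)^(q-1)) = 0"
    proof (intro allI impI)
      fix s assume s: "s < (t-1)*(q-1)"
      have "(t-1)*(q-1) + (q-1) = t*(q-1)" using tq q2
        by (metis Suc_diff_1 less_le_trans mult_Suc mult.commute add.commute zero_less_numeral le_numeral_extra(4) pos2)
      hence "s + (q-1) < t*(q-1)" using s by linarith
      thus "(\<Sum>a\<in>L1. c a * a^s / (a^(t-1)+1)^(q-1)) = 0"
        using H code_eq_aux[OF nz t1, where c=c and s=s and q=q] by simp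
    qed
  next
    assume H: "\<forall>s < (t-1)*(q-1). (\<Sum>a\<in>L1. c a * a^s / (a^(t-1)+1)^(q-1)) = 0"
    have hyp: "\<forall>e. q-1 \<le> e \<and> e < t*(q-1) \<longrightarrow> (\<Sum>a\<in>L1. c a * a^e / (a^t+a)^(q-1)) = 0"
    proof (intro allI impI)
      fix e assume e: "q-1 \<le> e \<and> e < t*(q-1)"
      have "(t-1)*(q-1) + (q-1) = t*(q-1)" using tq q2
        by (metis Suc_diff_1 less_le_trans mult_Suc mult.commute add.commute zero_less_numeral le_numeral_extra(4) pos2)
      hence "e - (q-1) < (t-1)*(q-1)" using e by linarith
      hence "(\<Sum>a\<in>L1. c a * a^(e-(q-1)) / (a^(t-1)+1)^(q-1)) = 0" using H by blast
      moreover have "e - (q-1) + (q-1) = e" using e by simp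
      ultimately show "(\<Sum>a\<in>L1. c a * a^e / (a^t+a)^(q-1)) = 0"
        using code_eq_aux[OF nz t1, where c=c and s="e-(q-1)" and q=q] by simp
    qed
    show "\<forall>s < t*(q-1). (\<Sum>a\<in>L1. c a * a^s / (a^t+a)^(q-1)) = 0"
      by (rule key[OF pr _ _ q2 assms(4) assms(5) _ L cq hyp, of m])
         (use ch assms(3) td pw in \<open>simp_all add: mult.commute\<close>)
  qed
  show ?thesis
    unfolding goppa_code_def d1 d2 poly_power pG1 pG2
  proof (intro Collect_cong conj_cong refl)
    fix c :: "'a \<Rightarrow> 'a"
    assume "\<forall>a\<in>L1. c a \<in> subfield_GF q"
    hence "\<forall>a\<in>L1. c a ^ q = c a" by (simp add: subfield_GF_def)
    from eqv[OF this] show "(\<forall>s < t*(q-1). (\<Sum>a\<in>L1. c a * a^s / (a^t+a)^(q-1)) = 0) \<longleftrightarrow>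
             (\<forall>s < (t-1)*(q-1). (\<Sum>a\<in>L1. c a * a^s / (a^(t-1)+1)^(q-1)) = 0)" .
  qed
qed

end
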